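(* Let $\Gamma$ be a finite tetravalent $G$-half-arc-transitive graph (for some $G\le\mathrm{Aut}(\Gamma)$) with $\mathrm{att}_G(\Gamma)$ even. Then for each vertex $v$ of $\Gamma$ and the two $G$-alternating cycles $C$ and $C'$ containing $v$, the antipodal vertex of $v$ on $C$ coincides with the antipodal vertex of $v$ on $C'$. Moreover, the involution $\tau$ of $V(\Gamma)$ interchanging each pair of antipodal vertices on all $G$-alternating cycles of $\Gamma$ is an automorphism of $\Gamma$ centralising $G$.
   Context: All graphs are finite and simple. For a tetravalent graph $\Gamma$ and $G\le \mathrm{Aut}(\Gamma)$, $\Gamma$ is $G$-half-arc-transitive if $G$ acts transitively on vertices and edges but not on arcs; then the $G$-orbits on arcs give two paired orientations of the edges, and each vertex is the tail of two and head of two incident edges. A $G$-alternating cycle is a cycle in which every two consecutive edges have a common head or a common tail; each vertex lies on exactly two $G$-alternating cycles. All $G$-alternating cycles have the same length $2\,\mathrm{rad}_G(\Gamma)$, and any two sharing a vertex meet in the same number $\mathrm{att}_G(\Gamma)$ of vertices. The antipodal vertex of $v_i$ on a cycle $(v_0,\dots,v_{2r-1})$ is $v_{i+r}$ (indices mod $2r$). *)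

theory Defs
  imports Main
begin

definition simple_graph :: "'a set \<Rightarrow> ('a \<Rightarrow> 'a \<Rightarrow> bool) \<Rightarrow> bool" where
  "simple_graph V E \<longleftrightarrow> finite V \<and> (\<forall>x y. E x y \<longrightarrow> x \<in> V \<and> y \<in> V)
     \<and> (\<forall>x y. E x y \<longrightarrow> E y x) \<and> (\<forall>x. \<not> E x x)"

definition tetravalent :: "'a set \<Rightarrow> ('a \<Rightarrow> 'a \<Rightarrow> bool) \<Rightarrow> bool" where
  "tetravalent V E \<longleftrightarrow> (\<forall>x\<in>V. card {y. E x y} = 4)"

definition graph_aut :: "'a set \<Rightarrow> ('a \<Rightarrow> 'a \<Rightarrow> bool) \<Rightarrow> ('a \<Rightarrow> 'a) \<Rightarrow> bool" where
  "graph_aut V E f \<longleftrightarrow> bij_betw f V V \<and> (\<forall>x. x \<notin> V \<longrightarrow> f x = x)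
     \<and> (\<forall>x\<in>V. \<forall>y\<in>V. E x y \<longleftrightarrow> E (f x) (f y))"

definition aut_subgroup :: "'a set \<Rightarrow> ('a \<Rightarrow> 'a \<Rightarrow> bool) \<Rightarrow> ('a \<Rightarrow> 'a) set \<Rightarrow> bool" where
  "aut_subgroup V E G \<longleftrightarrow> (\<forall>f\<in>G. graph_aut V E f) \<and> id \<in> G
     \<and> (\<forall>f\<in>G. \<forall>g\<in>G. f \<circ> g \<in> G) \<and> (\<forall>f\<in>G. inv f \<in> G)"

definition half_arc_transitive :: "'a set \<Rightarrow> ('a \<Rightarrow> 'a \<Rightarrow> bool) \<Rightarrow> ('a \<Rightarrow> 'a) set \<Rightarrow> bool" where
  "half_arc_transitive V E G \<longleftrightarrow>
     (\<forall>x\<in>V. \<forall>y\<in>V. \<exists>g\<in>G. g x = y)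
   \<and> (\<forall>x y u w. E x y \<longrightarrow> E u w \<longrightarrow> (\<exists>g\<in>G. (g x = u \<and> g y = w) \<or> (g x = w \<and> g y = u)))
   \<and> \<not> (\<forall>x y u w. E x y \<longrightarrow> E u w \<longrightarrow> (\<exists>g\<in>G. g x = u \<and> g y = w))"

text \<open>The orientation: the G-orbit of a fixed arc (x0,y0); (x,y) in it means x is the tail, y the head.
  The other orbit is its reverse; the choice does not affect alternating cycles.\<close>
definition orient :: "('a \<Rightarrow> 'a \<Rightarrow> bool) \<Rightarrow> ('a \<Rightarrow> 'a) set \<Rightarrow> 'a \<Rightarrow> 'a \<Rightarrow> bool" where
  "orient E G x y \<longleftrightarrow> (let a = (SOME a. E (fst a) (snd a)) in
      \<exists>g\<in>G. g (fst a) = x \<and> g (snd a) = y)"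

definition is_cycle :: "'a set \<Rightarrow> ('a \<Rightarrow> 'a \<Rightarrow> bool) \<Rightarrow> 'a list \<Rightarrow> bool" where
  "is_cycle V E cs \<longleftrightarrow> length cs \<ge> 3 \<and> distinct cs \<and> set cs \<subseteq> V
     \<and> (\<forall>i < length cs. E (cs ! i) (cs ! ((i + 1) mod length cs)))"

definition alt_cycle :: "'a set \<Rightarrow> ('a \<Rightarrow> 'a \<Rightarrow> bool) \<Rightarrow> ('a \<Rightarrow> 'a) set \<Rightarrow> 'a list \<Rightarrow> bool" where
  "alt_cycle V E G cs \<longleftrightarrow> is_cycle V E cs \<and>
     (\<forall>i < length cs.
        let n = length cs; v = cs ! i; p = cs ! ((i + n - 1) mod n); q = cs ! ((i + 1) mod n) in
        (orient E G v p \<and> orient E G v q) \<or> (orient E G p v \<and> orient E G q v))"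

definition cycle_edges :: "'a list \<Rightarrow> 'a set set" where
  "cycle_edges cs = {{cs ! i, cs ! ((i + 1) mod length cs)} | i. i < length cs}"

text \<open>att_G(Gamma): the number of common vertices of two distinct G-alternating cycles sharing a vertex
  (independent of the choice, by the standing facts).\<close>
definition att :: "'a set \<Rightarrow> ('a \<Rightarrow> 'a \<Rightarrow> bool) \<Rightarrow> ('a \<Rightarrow> 'a) set \<Rightarrow> nat" where
  "att V E G = (let P = (SOME P. alt_cycle V E G (fst P) \<and> alt_cycle V E G (snd P)
        \<and> cycle_edges (fst P) \<noteq> cycle_edges (snd P) \<and> set (fst P) \<inter> set (snd P) \<noteq> {})
     in card (set (fst P) \<inter> set (snd P)))"

definition antipode :: "'a list \<Rightarrow> nat \<Rightarrow> 'a" where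
  "antipode cs i = cs ! ((i + length cs div 2) mod length cs)"

end

theory Submission
  imports Defs
begin

definition cyc :: "'a list \<Rightarrow> int \<Rightarrow> 'a" where
  "cyc C k = C ! nat (k mod int (length C))"

lemma cyc_cong: "k mod int (length C) = l mod int (length C) \<Longrightarrow> cyc C k = cyc C l"
  unfolding cyc_def by simp

lemma cyc_nat: "cyc C (int j) = C ! (j mod length C)"
  unfolding cyc_def by (simp add: of_nat_mod[symmetric])

lemma cyc_nth: "i < length C \<Longrightarrow> cyc C (int i) = C ! i"
  by (simp add: cyc_nat)

lemma cyc_idx: "length C > 0 \<Longrightarrow> nat (k mod int (length C)) < length C \<and> int (nat (k mod int (length C))) = k mod int (length C)"
  by (simp add: nat_less_iff)

lemma set_cyc: "length C > 0 \<Longrightarrow> set C = range (cyc C)"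
proof
  assume n: "length C > 0"
  show "set C \<subseteq> range (cyc C)"
  proof
    fix x assume "x \<in> set C"
    then obtain i where "i < length C" "x = C ! i" by (metis in_set_conv_nth)
    then show "x \<in> range (cyc C)" using cyc_nth by (metis rangeI)
  qed
  show "range (cyc C) \<subseteq> set C"
    using cyc_idx[OF n] unfolding cyc_def by auto
qed

lemma antipode_cyc: "i < length C \<Longrightarrow> antipode C i = cyc C (int i + int (length C) div 2)"
proof -
  have "int (i + length C div 2) = int i + int (length C) div 2" by (simp add: zdiv_int)
  then show "antipode C i = cyc C (int i + int (length C) div 2)"
    unfolding antipode_def using cyc_nat[of C "i + length C div 2"] by simp
qed

definition edgesf :: "(int \<Rightarrow> 'a) \<Rightarrow> 'a set set" where "edgesf c = {{c k, c (k + 1)} | k. True}"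

lemma edges_cyc: "length C > 0 \<Longrightarrow> cycle_edges C = edgesf (cyc C)"
proof
  assume n: "length C > 0"
  show "cycle_edges C \<subseteq> edgesf (cyc C)"
  proof
    fix e assume "e \<in> cycle_edges C"
    then obtain i where i: "i < length C" "e = {C ! i, C ! ((i + 1) mod length C)}"
      unfolding cycle_edges_def by blast
    then have "e = {cyc C (int i), cyc C (int i + 1)}"
      using cyc_nth[OF i(1)] cyc_nat[of C "i + 1"] by (simp add: add.commute)
    then show "e \<in> edgesf (cyc C)" unfolding edgesf_def by blast
  qed
  show "edgesf (cyc C) \<subseteq> cycle_edges C"
  proof
    fix e assume "e \<in> edgesf (cyc C)"
    then obtain k where k: "e = {cyc C k, cyc C (k + 1)}" unfolding edgesf_def by blast
    define i where "i = nat (k mod int (length C))"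
    have i: "i < length C" "int i = k mod int (length C)" using cyc_idx[OF n] unfolding i_def by auto
    have "cyc C k = C ! i" unfolding cyc_def i_def ..
    moreover have "cyc C (k + 1) = C ! ((i + 1) mod length C)"
    proof -
      have "cyc C (k + 1) = cyc C (int (i + 1))"
        by (rule cyc_cong) (simp add: i(2), metis add.commute mod_add_right_eq)
      then show ?thesis using cyc_nat[of C "i + 1"] by (rule trans)
    qed
    ultimately have "e = {C ! i, C ! ((i + 1) mod length C)}" using k by simp
    then show "e \<in> cycle_edges C" unfolding cycle_edges_def using i(1) by blast
  qed
qed

lemma edgesf_shift: "edgesf (\<lambda>k. c (a + k)) = edgesf c"
  unfolding edgesf_def
proof (intro set_eqI iffI)
  fix e assume "e \<in> {{c (a + k), c (a + (k + 1))} |k. True}"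
  then obtain k where "e = {c (a + k), c (a + (k + 1))}" by blast
  then show "e \<in> {{c k, c (k + 1)} |k. True}" by (intro CollectI exI[of _ "a + k"]) (simp add: add.assoc)
next
  fix e assume "e \<in> {{c k, c (k + 1)} |k. True}"
  then obtain k where "e = {c k, c (k + 1)}" by blast
  moreover have "a + (k - a) = k" "a + (k - a + 1) = k + 1" by simp_all
  ultimately show "e \<in> {{c (a + k), c (a + (k + 1))} |k. True}" by (intro CollectI exI[of _ "k - a"]) metis
qed

lemma edgesf_rev: "edgesf (\<lambda>k. c (- k)) = edgesf c"
  unfolding edgesf_def
proof (intro set_eqI iffI)
  fix e assume "e \<in> {{c (- k), c (- (k + 1))} |k. True}"
  then obtain k where "e = {c (- k), c (- (k + 1))}" by blast
  then show "e \<in> {{c k, c (k + 1)} |k. True}" by (intro CollectI exI[of _ "- k - 1"]) (simp add: insert_commute)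
next
  fix e assume "e \<in> {{c k, c (k + 1)} |k. True}"
  then obtain k where "e = {c k, c (k + 1)}" by blast
  moreover have "- (- k - 1) = k + 1" "- (- k - 1 + 1) = k" by simp_all
  ultimately show "e \<in> {{c (- k), c (- (k + 1))} |k. True}" by (intro CollectI exI[of _ "- k - 1"]) (simp only:, simp add: insert_commute)
qed

lemma range_shift: "range (\<lambda>k. c (a + k)) = range (c :: int \<Rightarrow> 'b)"
  by (auto, metis add_diff_cancel_left' add_diff_eq diff_add_cancel rangeI)

lemma range_rev: "range (\<lambda>k. c (- k)) = range (c :: int \<Rightarrow> 'b)"
  by (auto, metis minus_minus rangeI)

locale hat =
  fixes V :: "'a set" and E :: "'a \<Rightarrow> 'a \<Rightarrow> bool" and G :: "('a \<Rightarrow> 'a) set"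
  assumes sg: "simple_graph V E" and tv: "tetravalent V E"
    and asg: "aut_subgroup V E G" and hatr: "half_arc_transitive V E G"
begin

abbreviation "ar x y \<equiv> orient E G x y"

lemma finV: "finite V" using sg by (simp add: simple_graph_def)
lemma EV: "E x y \<Longrightarrow> x \<in> V \<and> y \<in> V" using sg by (simp add: simple_graph_def)
lemma Esym: "E x y \<Longrightarrow> E y x" using sg by (simp add: simple_graph_def)
lemma Eirr: "\<not> E x x" using sg by (simp add: simple_graph_def)

lemma G_aut: "g \<in> G \<Longrightarrow> graph_aut V E g" using asg by (simp add: aut_subgroup_def)
lemma G_comp: "f \<in> G \<Longrightarrow> g \<in> G \<Longrightarrow> f \<circ> g \<in> G" using asg by (simp add: aut_subgroup_def)
lemma G_inv: "f \<in> G \<Longrightarrow> inv f \<in> G" using asg by (simp add: aut_subgroup_def)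
lemma G_id: "id \<in> G" using asg by (simp add: aut_subgroup_def)

lemma G_V: "g \<in> G \<Longrightarrow> x \<in> V \<Longrightarrow> g x \<in> V"
  using G_aut[of g] unfolding graph_aut_def bij_betw_def by auto
lemma G_out: "g \<in> G \<Longrightarrow> x \<notin> V \<Longrightarrow> g x = x"
  using G_aut[of g] unfolding graph_aut_def by auto
lemma G_E: "g \<in> G \<Longrightarrow> E x y \<Longrightarrow> E (g x) (g y)"
  using G_aut[of g] EV[of x y] unfolding graph_aut_def by auto

lemma G_inj: "g \<in> G \<Longrightarrow> inj g"
proof (rule injI)
  fix x y assume g: "g \<in> G" and e: "g x = g y"
  have ij: "inj_on g V" using G_aut[OF g] unfolding graph_aut_def bij_betw_def by auto
  show "x = y"
  proof (cases "x \<in> V"; cases "y \<in> V")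
    assume "x \<in> V" "y \<in> V" thus ?thesis using ij e by (auto dest: inj_onD)
  next
    assume "x \<in> V" "y \<notin> V" thus ?thesis using e G_V[OF g] G_out[OF g] by force
  next
    assume "x \<notin> V" "y \<in> V" thus ?thesis using e G_V[OF g] G_out[OF g] by force
  next
    assume "x \<notin> V" "y \<notin> V" thus ?thesis using e G_out[OF g] by force
  qed
qed

lemma G_surj: "g \<in> G \<Longrightarrow> surj g"
proof -
  assume g: "g \<in> G"
  have im: "g ` V = V" using G_aut[OF g] unfolding graph_aut_def bij_betw_def by auto
  show ?thesis
  proof (rule surjI[where f="\<lambda>y. if y \<in> V then (SOME x. x \<in> V \<and> g x = y) else y"])
    fix y show "g (if y \<in> V then (SOME x. x \<in> V \<and> g x = y) else y) = y"
    proof (cases "y \<in> V")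
      case True
      then have "\<exists>x. x \<in> V \<and> g x = y" using im by force
      then show ?thesis using True by (auto intro: someI2_ex)
    next
      case False then show ?thesis using G_out[OF g] by auto
    qed
  qed
qed

lemma G_bij: "g \<in> G \<Longrightarrow> bij g" using G_inj G_surj by (simp add: bij_def)
lemma G_inv_f: "g \<in> G \<Longrightarrow> inv g (g x) = x" using G_inj by (simp add: inv_f_f)
lemma G_f_inv: "g \<in> G \<Longrightarrow> g (inv g x) = x" using G_surj by (simp add: surj_f_inv_f)

lemma G_E_iff: "g \<in> G \<Longrightarrow> E (g x) (g y) \<longleftrightarrow> E x y"
  using G_E[of g x y] G_E[of "inv g" "g x" "g y"] G_inv G_inv_f by auto

lemma vtrans: "x \<in> V \<Longrightarrow> y \<in> V \<Longrightarrow> \<exists>g\<in>G. g x = y"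
  using hatr by (simp add: half_arc_transitive_def)
lemma etrans: "E x y \<Longrightarrow> E u w \<Longrightarrow> \<exists>g\<in>G. (g x = u \<and> g y = w) \<or> (g x = w \<and> g y = u)"
  using hatr unfolding half_arc_transitive_def by blast
lemma notarc: "\<not> (\<forall>x y u w. E x y \<longrightarrow> E u w \<longrightarrow> (\<exists>g\<in>G. g x = u \<and> g y = w))"
  using hatr unfolding half_arc_transitive_def by blast

definition "a0 = (SOME a. E (fst a) (snd a))"
lemma a0E: "E (fst a0) (snd a0)"
proof -
  have "\<exists>a. E (fst a) (snd a)" using notarc by auto
  then show ?thesis unfolding a0_def by (rule someI_ex)
qed

lemma ar_def: "ar x y \<longleftrightarrow> (\<exists>g\<in>G. g (fst a0) = x \<and> g (snd a0) = y)"
  unfolding orient_def a0_def Let_def by simp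

lemma ar_E: "ar x y \<Longrightarrow> E x y"
  using G_E a0E unfolding ar_def by blast

lemma ar_g: "g \<in> G \<Longrightarrow> ar x y \<Longrightarrow> ar (g x) (g y)"
  unfolding ar_def by (metis G_comp comp_apply)

lemma ar_g_iff: "g \<in> G \<Longrightarrow> ar (g x) (g y) \<longleftrightarrow> ar x y"
  using ar_g[of g x y] ar_g[of "inv g" "g x" "g y"] G_inv G_inv_f by auto

lemma ar_total: "E x y \<Longrightarrow> ar x y \<or> ar y x"
  using etrans[OF a0E, of x y] unfolding ar_def by blast

lemma ar_antisym: "ar x y \<Longrightarrow> \<not> ar y x"
proof
  assume xy: "ar x y" and yx: "ar y x"
  have all: "ar u w" if uw: "E u w" for u w
  proof -
    obtain h where h: "h \<in> G" "(h x = u \<and> h y = w) \<or> (h x = w \<and> h y = u)"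
      using etrans[OF ar_E[OF xy] uw] by blast
    then show ?thesis using ar_g[OF h(1) xy] ar_g[OF h(1) yx] by auto
  qed
  have "\<forall>x y u w. E x y \<longrightarrow> E u w \<longrightarrow> (\<exists>g\<in>G. g x = u \<and> g y = w)"
  proof (intro allI impI)
    fix x' y' u w assume "E x' y'" "E u w"
    then obtain g1 g2 where g1: "g1 \<in> G" "g1 (fst a0) = x'" "g1 (snd a0) = y'"
      and g2: "g2 \<in> G" "g2 (fst a0) = u" "g2 (snd a0) = w"
      using all unfolding ar_def by meson
    show "\<exists>g\<in>G. g x' = u \<and> g y' = w"
      by (rule bexI[of _ "g2 \<circ> inv g1"]) (use g1 g2 G_inv_f G_comp G_inv in auto)
  qed
  then show False using notarc by blast
qed


definition "outn x = {y. ar x y}"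
definition "inn x = {y. ar y x}"

lemma ar_V: "ar x y \<Longrightarrow> x \<in> V \<and> y \<in> V" using ar_E EV by blast

lemma outn_fin: "finite (outn x)"
  by (rule finite_subset[OF _ finV]) (auto simp: outn_def dest: ar_V)
lemma inn_fin: "finite (inn x)"
  by (rule finite_subset[OF _ finV]) (auto simp: inn_def dest: ar_V)

lemma deg4: "x \<in> V \<Longrightarrow> card (outn x) + card (inn x) = 4"
proof -
  assume x: "x \<in> V"
  have "{y. E x y} = outn x \<union> inn x"
    using ar_total ar_E Esym unfolding outn_def inn_def by blast
  moreover have "outn x \<inter> inn x = {}" using ar_antisym unfolding outn_def inn_def by blast
  ultimately have "card {y. E x y} = card (outn x) + card (inn x)"
    using card_Un_disjoint[OF outn_fin inn_fin] by simp
  then show ?thesis using tv x unfolding tetravalent_def by simp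
qed

lemma outn_g: "g \<in> G \<Longrightarrow> outn (g x) = g ` outn x"
proof -
  assume g: "g \<in> G"
  show ?thesis
  proof (rule set_eqI, rule iffI)
    fix z assume "z \<in> outn (g x)"
    then have "ar x (inv g z)" using ar_g_iff[OF g, of x "inv g z"] G_f_inv[OF g] by (simp add: outn_def)
    then show "z \<in> g ` outn x" using G_f_inv[OF g] unfolding outn_def by (metis image_eqI mem_Collect_eq)
  qed (auto simp: outn_def ar_g[OF g])
qed

lemma inn_g: "g \<in> G \<Longrightarrow> inn (g x) = g ` inn x"
proof -
  assume g: "g \<in> G"
  show ?thesis
  proof (rule set_eqI, rule iffI)
    fix z assume "z \<in> inn (g x)"
    then have "ar (inv g z) x" using ar_g_iff[OF g, of "inv g z" x] G_f_inv[OF g] by (simp add: inn_def)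
    then show "z \<in> g ` inn x" using G_f_inv[OF g] unfolding inn_def by (metis image_eqI mem_Collect_eq)
  qed (auto simp: inn_def ar_g[OF g])
qed

lemma outn_const: "x \<in> V \<Longrightarrow> y \<in> V \<Longrightarrow> card (outn y) = card (outn x)"
proof -
  assume "x \<in> V" "y \<in> V"
  then obtain g where g: "g \<in> G" "g x = y" using vtrans by blast
  then show ?thesis using outn_g[OF g(1), of x] card_image[OF inj_on_subset[OF G_inj[OF g(1)]]] by auto
qed

lemma inn_const: "x \<in> V \<Longrightarrow> y \<in> V \<Longrightarrow> card (inn y) = card (inn x)"
proof -
  assume "x \<in> V" "y \<in> V"
  then obtain g where g: "g \<in> G" "g x = y" using vtrans by blast
  then show ?thesis using inn_g[OF g(1), of x] card_image[OF inj_on_subset[OF G_inj[OF g(1)]]] by auto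
qed

lemma deg2: "x \<in> V \<Longrightarrow> card (outn x) = 2 \<and> card (inn x) = 2"
proof -
  assume x: "x \<in> V"
  define A where "A = {(u, w). ar u w}"
  have A1: "A = (SIGMA u:V. outn u)" unfolding A_def outn_def using ar_V by auto
  have A2: "A = (\<lambda>(w, u). (u, w)) ` (SIGMA w:V. inn w)" unfolding A_def inn_def using ar_V by force
  have c1: "card A = card V * card (outn x)"
    unfolding A1 using finV outn_fin outn_const[OF x] by simp
  have "inj_on (\<lambda>(w, u). (u, w)) (SIGMA w:V. inn w)" by (auto simp: inj_on_def)
  then have c2: "card A = card V * card (inn x)"
    unfolding A2 using finV inn_fin inn_const[OF x] by (simp add: card_image)
  have "card V > 0" using x finV card_gt_0_iff by blast
  then have "card (outn x) = card (inn x)" using c1 c2 by simp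
  then show ?thesis using deg4[OF x] by simp
qed

lemma force_out: "ar x p \<Longrightarrow> ar x q \<Longrightarrow> ar x q' \<Longrightarrow> p \<noteq> q \<Longrightarrow> p \<noteq> q' \<Longrightarrow> q = q'"
proof (rule ccontr)
  assume a: "ar x p" "ar x q" "ar x q'" "p \<noteq> q" "p \<noteq> q'" "q \<noteq> q'"
  then have "{p, q, q'} \<subseteq> outn x" by (auto simp: outn_def)
  then have "card {p, q, q'} \<le> card (outn x)" using outn_fin card_mono by blast
  moreover have "card (outn x) = 2" using deg2 ar_V a(1) by blast
  ultimately show False using a by simp
qed

lemma force_in: "ar p x \<Longrightarrow> ar q x \<Longrightarrow> ar q' x \<Longrightarrow> p \<noteq> q \<Longrightarrow> p \<noteq> q' \<Longrightarrow> q = q'"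
proof (rule ccontr)
  assume a: "ar p x" "ar q x" "ar q' x" "p \<noteq> q" "p \<noteq> q'" "q \<noteq> q'"
  then have "{p, q, q'} \<subseteq> inn x" by (auto simp: inn_def)
  then have "card {p, q, q'} \<le> card (inn x)" using inn_fin card_mono by blast
  moreover have "card (inn x) = 2" using deg2 ar_V a(1) by blast
  ultimately show False using a by simp
qed


definition "tlf c k \<longleftrightarrow> ar (c k) (c (k - 1)) \<and> ar (c k) (c (k + 1))"
definition "hdf c k \<longleftrightarrow> ar (c (k - 1)) (c k) \<and> ar (c (k + 1)) (c k)"
definition "altf c (n::int) \<longleftrightarrow> n \<ge> 3 \<and> (\<forall>k. tlf c k \<or> hdf c k)
   \<and> (\<forall>k l. c k = c l \<longleftrightarrow> k mod n = l mod n)"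

lemma altf_ar: "altf c n \<Longrightarrow> ar (c k) (c (k + 1)) \<or> ar (c (k + 1)) (c k)"
  unfolding altf_def tlf_def hdf_def by blast

lemma altf_E: "altf c n \<Longrightarrow> E (c k) (c (k + 1))"
  using altf_ar ar_E Esym by blast

lemma altf_V: "altf c n \<Longrightarrow> c k \<in> V"
  using altf_ar ar_V by blast

lemma altf_inj: "altf c n \<Longrightarrow> c k = c l \<longleftrightarrow> k mod n = l mod n"
  unfolding altf_def by blast

lemma altf_n: "altf c n \<Longrightarrow> n \<ge> 3" unfolding altf_def by blast

lemma altf_per: "altf c n \<Longrightarrow> c (k + t * n) = c k"
  using altf_inj by simp

lemma altf_mod: "altf c n \<Longrightarrow> c (k mod n) = c k"
  using altf_inj by simp

lemma altf_nb: "altf c n \<Longrightarrow> c (k - 1) \<noteq> c (k + 1)"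
proof
  assume a: "altf c n" "c (k - 1) = c (k + 1)"
  then have "(k - 1) mod n = (k + 1) mod n" using altf_inj by blast
  then have "n dvd (k - 1) - (k + 1)" by (simp add: mod_eq_dvd_iff)
  then have "n dvd 2" by simp
  then have "n \<le> 2" by (simp add: zdvd_imp_le)
  then show False using altf_n[OF a(1)] by simp
qed

lemma tl_hd: "altf c n \<Longrightarrow> tlf c k \<longleftrightarrow> \<not> hdf c k"
  unfolding altf_def tlf_def hdf_def using ar_antisym by blast

lemma tl_step: "altf c n \<Longrightarrow> tlf c (k + 1) \<longleftrightarrow> \<not> tlf c k"
proof -
  assume a: "altf c n"
  have h1: "k + 1 - 1 = k" by simp
  show ?thesis
  proof
    assume "tlf c (k + 1)"
    then have "ar (c (k+1)) (c k)" unfolding tlf_def by simp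
    then show "\<not> tlf c k" unfolding tlf_def using ar_antisym by blast
  next
    assume "\<not> tlf c k"
    then have "hdf c k" using a unfolding altf_def by blast
    then have "ar (c (k+1)) (c k)" unfolding hdf_def by simp
    then have "\<not> hdf c (k+1)" unfolding hdf_def using ar_antisym by simp
    then show "tlf c (k + 1)" using a unfolding altf_def by blast
  qed
qed

lemma tl_nat: "altf c n \<Longrightarrow> tlf c (int j) \<longleftrightarrow> (tlf c 0 \<longleftrightarrow> even j)"
proof (induction j)
  case 0 then show ?case by simp
next
  case (Suc j) then show ?case using tl_step[OF Suc.prems, of "int j"] by (simp add: add.commute)
qed

lemma altf_even: "altf c n \<Longrightarrow> even n"
proof -
  assume a: "altf c n"
  have "n \<ge> 0" using altf_n[OF a] by simp
  then obtain j where j: "n = int j" by (metis nonneg_eq_int)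
  have "c (0 + 1 * n) = c 0" "c (-1 + 1 * n) = c (-1)" "c (1 + 1 * n) = c 1" using altf_per[OF a] by blast+
  then have "tlf c n = tlf c 0" unfolding tlf_def by (simp add: add.commute)
  then show ?thesis using tl_nat[OF a, of j] j by auto
qed

lemma altf_shift: "altf c n \<Longrightarrow> altf (\<lambda>k. c (a + k)) n"
proof -
  assume a: "altf c n"
  have "tlf (\<lambda>k. c (a + k)) k \<or> hdf (\<lambda>k. c (a + k)) k" for k
  proof -
    have "tlf c (a + k) \<or> hdf c (a + k)" using a unfolding altf_def by blast
    moreover have e: "a + (k + 1) = a + k + 1" "a + (k - 1) = a + k - 1" by simp_all
    ultimately show ?thesis unfolding tlf_def hdf_def by (simp only: e)
  qed
  moreover have "(a + k) mod n = (a + l) mod n \<longleftrightarrow> k mod n = l mod n" for k l :: int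
    by (simp add: mod_eq_dvd_iff)
  ultimately show ?thesis using a unfolding altf_def by auto
qed

lemma altf_rev: "altf c n \<Longrightarrow> altf (\<lambda>k. c (- k)) n"
proof -
  assume a: "altf c n"
  have "tlf (\<lambda>k. c (- k)) k \<or> hdf (\<lambda>k. c (- k)) k" for k
  proof -
    have "tlf c (- k) \<or> hdf c (- k)" using a unfolding altf_def by blast
    moreover have e: "- (k + 1) = - k - 1" "- (k - 1) = - k + 1" by simp_all
    ultimately show ?thesis unfolding tlf_def hdf_def by (simp only: e) blast
  qed
  moreover have "(- k) mod n = (- l) mod n \<longleftrightarrow> k mod n = l mod n" for k l :: int
  proof -
    have "- k - - l = - (k - l)" by simp
    then show ?thesis by (simp only: mod_eq_dvd_iff dvd_minus_iff)
  qed
  ultimately show ?thesis using a unfolding altf_def by auto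
qed

lemma tlf_g: "g \<in> G \<Longrightarrow> tlf (g \<circ> c) k \<longleftrightarrow> tlf c k"
  unfolding tlf_def using ar_g_iff by simp
lemma hdf_g: "g \<in> G \<Longrightarrow> hdf (g \<circ> c) k \<longleftrightarrow> hdf c k"
  unfolding hdf_def using ar_g_iff by simp

lemma altf_g: "g \<in> G \<Longrightarrow> altf c n \<Longrightarrow> altf (g \<circ> c) n"
proof -
  assume g: "g \<in> G" and a: "altf c n"
  have eq: "g x = g y \<longleftrightarrow> x = y" for x y using G_inj[OF g] by (auto dest: injD)
  show ?thesis unfolding altf_def
  proof (intro conjI allI)
    show "n \<ge> 3" using altf_n[OF a] .
  next
    fix k show "tlf (g \<circ> c) k \<or> hdf (g \<circ> c) k"
      using a tlf_g[OF g, of c k] hdf_g[OF g, of c k] unfolding altf_def by blast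
  next
    fix k l show "(g \<circ> c) k = (g \<circ> c) l \<longleftrightarrow> k mod n = l mod n"
      using altf_inj[OF a, of k l] eq[of "c k" "c l"] by simp
  qed
qed

lemma prop_step:
  assumes c: "altf c n" and d: "altf d m" and inj: "inj \<phi>"
    and pr: "\<And>x y. ar x y \<Longrightarrow> ar (\<phi> x) (\<phi> y)"
    and h0: "\<phi> (c (k - 1)) = d (k - 1)" and h1: "\<phi> (c k) = d k"
  shows "\<phi> (c (k + 1)) = d (k + 1)"
proof -
  have ne1: "d (k - 1) \<noteq> d (k + 1)" using altf_nb[OF d] .
  have ne2: "d (k - 1) \<noteq> \<phi> (c (k + 1))" using altf_nb[OF c] inj h0 by (metis injD)
  show ?thesis
  proof (cases "tlf c k")
    case True
    then have a1: "ar (d k) (d (k - 1))" "ar (d k) (\<phi> (c (k + 1)))"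
      using pr h0 h1 unfolding tlf_def by metis+
    then have "\<not> hdf d k" unfolding hdf_def using ar_antisym by blast
    then have "tlf d k" using tl_hd[OF d] by blast
    then have "ar (d k) (d (k + 1))" unfolding tlf_def by blast
    then show ?thesis using force_out[OF a1(1) _ a1(2) ne1 ne2] by simp
  next
    case False
    then have "hdf c k" using tl_hd[OF c] by blast
    then have a1: "ar (d (k - 1)) (d k)" "ar (\<phi> (c (k + 1))) (d k)"
      using pr h0 h1 unfolding hdf_def by metis+
    then have "\<not> tlf d k" unfolding tlf_def using ar_antisym by blast
    then have "hdf d k" using tl_hd[OF d] by blast
    then have "ar (d (k + 1)) (d k)" unfolding hdf_def by blast
    then show ?thesis using force_in[OF a1(1) _ a1(2) ne1 ne2] by simp
  qed
qed

lemma propag: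
  assumes c: "altf c n" and d: "altf d m" and inj: "inj \<phi>"
    and pr: "\<And>x y. ar x y \<Longrightarrow> ar (\<phi> x) (\<phi> y)"
    and h0: "\<phi> (c 0) = d 0" and h1: "\<phi> (c 1) = d 1"
  shows "(\<forall>k. \<phi> (c k) = d k) \<and> n = m"
proof -
  have nat: "\<phi> (c (int j)) = d (int j) \<and> \<phi> (c (int j + 1)) = d (int j + 1)" for j
  proof (induction j)
    case 0 then show ?case using h0 h1 by simp
  next
    case (Suc j)
    have "\<phi> (c (int j + 1 + 1)) = d (int j + 1 + 1)"
      using prop_step[OF c d inj pr, of "int j + 1"] Suc by simp
    then show ?case using Suc by (simp add: add.commute add.left_commute)
  qed
  have n0: "n \<ge> 0" "m \<ge> 0" using altf_n[OF c] altf_n[OF d] by simp_all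
  have "d n = d 0"
  proof -
    have "d n = \<phi> (c n)" using nat[of "nat n"] n0 by simp
    also have "c n = c 0" using altf_per[OF c, of 0 1] by simp
    finally show ?thesis using h0 by simp
  qed
  then have "m dvd n" using altf_inj[OF d] by (simp add: dvd_eq_mod_eq_0)
  moreover have "n dvd m"
  proof -
    have "\<phi> (c m) = d m" using nat[of "nat m"] n0 by simp
    also have "d m = d 0" using altf_per[OF d, of 0 1] by simp
    finally have "c m = c 0" using h0 inj by (metis injD)
    then show ?thesis using altf_inj[OF c] by (simp add: dvd_eq_mod_eq_0)
  qed
  ultimately have nm: "n = m" using n0 by (simp add: zdvd_antisym_nonneg)
  have "\<phi> (c k) = d k" for k
  proof (cases "k \<ge> 0")
    case True then show ?thesis using nat[of "nat k"] by simp
  next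
    case False
    define k' where "k' = k + (- k) * n"
    have "k' \<ge> 0" using False altf_n[OF c] unfolding k'_def
      by (smt (verit) mult_le_cancel_left1)
    then have "\<phi> (c k') = d k'" using nat[of "nat k'"] by simp
    moreover have "c k' = c k" unfolding k'_def using altf_per[OF c] .
    moreover have "d k' = d k" unfolding k'_def nm using altf_per[OF d] .
    ultimately show ?thesis by simp
  qed
  then show ?thesis using nm by simp
qed


lemma same_role:
  assumes c: "altf c n" and d: "altf d m" and v: "c 0 = d 0" and r: "tlf c 0 \<longleftrightarrow> tlf d 0"
  shows "((\<forall>k. d k = c k) \<or> (\<forall>k. d k = c (- k))) \<and> n = m"
proof -
  have inj: "inj (id :: 'a \<Rightarrow> 'a)" by simp
  have pr: "\<And>x y. ar x y \<Longrightarrow> ar (id x) (id y)" by simp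
  have ne: "c (-1) \<noteq> c 1" using altf_nb[OF c, of 0] by simp
  have cr: "altf (\<lambda>k. c (- k)) n" using altf_rev[OF c] .
  have key: "d 1 = c 1 \<or> d 1 = c (-1)"
  proof (cases "tlf c 0")
    case True
    then have "tlf d 0" using r by simp
    then have "ar (c 0) (d 1)" using v unfolding tlf_def by simp
    moreover have "ar (c 0) (c (-1))" "ar (c 0) (c 1)" using True unfolding tlf_def by simp_all
    ultimately show ?thesis using force_out[of "c 0" "c 1" "c (-1)" "d 1"] ne by metis
  next
    case False
    then have "hdf c 0" "hdf d 0" using r tl_hd[OF c] tl_hd[OF d] by blast+
    then have "ar (d 1) (c 0)" "ar (c (-1)) (c 0)" "ar (c 1) (c 0)" using v unfolding hdf_def by simp_all
    then show ?thesis using force_in[of "c 1" "c 0" "c (-1)" "d 1"] ne by metis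
  qed
  then show ?thesis
  proof
    assume "d 1 = c 1"
    then show ?thesis using propag[OF c d inj pr] v by (simp add: eq_commute)
  next
    assume "d 1 = c (-1)"
    then have "(\<forall>k. id (c (- k)) = d k) \<and> n = m" using propag[OF cr d inj pr] v by simp
    then show ?thesis by simp
  qed
qed

lemma refl_exists:
  assumes c: "altf c n"
  shows "\<exists>\<sigma>\<in>G. \<forall>k. \<sigma> (c k) = c (- k)"
proof -
  have e1: "E (c 0) (c 1)" using altf_E[OF c, of 0] by simp
  have e2: "E (c 0) (c (-1))" using altf_E[OF c, of "-1"] Esym by simp
  obtain g where g: "g \<in> G" "(g (c 0) = c 0 \<and> g (c 1) = c (-1)) \<or> (g (c 0) = c (-1) \<and> g (c 1) = c 0)"
    using etrans[OF e1 e2] by blast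
  have "\<not> (g (c 0) = c (-1) \<and> g (c 1) = c 0)"
  proof
    assume a: "g (c 0) = c (-1) \<and> g (c 1) = c 0"
    have "tlf c 0 \<or> hdf c 0" using c unfolding altf_def by blast
    then show False
    proof
      assume "tlf c 0"
      then have "ar (c 0) (c 1)" "ar (c 0) (c (-1))" unfolding tlf_def by simp_all
      then show False using ar_g[OF g(1), of "c 0" "c 1"] a ar_antisym by metis
    next
      assume "hdf c 0"
      then have "ar (c 1) (c 0)" "ar (c (-1)) (c 0)" unfolding hdf_def by simp_all
      then show False using ar_g[OF g(1), of "c 1" "c 0"] a ar_antisym by metis
    qed
  qed
  then have "g (c 0) = c 0" "g (c 1) = c (-1)" using g(2) by blast+
  then have "\<forall>k. g (c k) = c (- k)"
    using propag[OF c altf_rev[OF c] G_inj[OF g(1)] ar_g[OF g(1)]] by simp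
  then show ?thesis using g(1) by blast
qed

lemma inv_parity:
  assumes "finite B" "\<forall>x\<in>B. f x \<in> B \<and> f (f x) = x"
  shows "even (card B) \<longleftrightarrow> even (card {x\<in>B. f x = x})"
  using assms
proof (induction "card B" arbitrary: B rule: less_induct)
  case less
  show ?case
  proof (cases "\<exists>x\<in>B. f x \<noteq> x")
    case False
    then have "{x\<in>B. f x = x} = B" by auto
    then show ?thesis by simp
  next
    case True
    then obtain x where x: "x \<in> B" "f x \<noteq> x" by blast
    define B' where "B' = B - {x, f x}"
    have fx: "f x \<in> B" using less.prems x by blast
    have cB: "card B' = card B - 2" unfolding B'_def using x fx less.prems(1)
      by (simp add: card_Diff_subset)
    have "x \<noteq> f x" using x(2) by metis
    then have "card {x, f x} = 2" by simp
    moreover have "card {x, f x} \<le> card B" using x fx less.prems(1) by (intro card_mono) auto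
    ultimately have cB2: "card B \<ge> 2" by simp
    have cl: "\<forall>y\<in>B'. f y \<in> B' \<and> f (f y) = y"
    proof
      fix y assume y: "y \<in> B'"
      then have y1: "y \<in> B" "y \<noteq> x" "y \<noteq> f x" unfolding B'_def by auto
      have ff: "f (f y) = y" "f y \<in> B" "f (f x) = x" using less.prems(2) y1(1) x(1) by auto
      have "f y \<noteq> x" using ff y1 by metis
      moreover have "f y \<noteq> f x" using ff y1 by metis
      ultimately show "f y \<in> B' \<and> f (f y) = y" unfolding B'_def using ff by auto
    qed
    have lt: "card B' < card B" using cB cB2 by simp
    have finB': "finite B'" unfolding B'_def using less.prems(1) by simp
    have "even (card B') \<longleftrightarrow> even (card {y\<in>B'. f y = y})"
      using less.hyps[OF lt finB' cl] .
    moreover have "f (f x) = x" using less.prems(2) x(1) by blast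
    then have "{y\<in>B'. f y = y} = {y\<in>B. f y = y}" unfolding B'_def using x by auto
    moreover have "card B = card B' + 2" using cB cB2 by simp
    ultimately show ?thesis by simp
  qed
qed

lemma fix_pts:
  assumes c: "altf c n" and e: "c (- k) = c k"
  shows "c k = c 0 \<or> c k = c (n div 2)"
proof -
  obtain h where h: "n = 2 * h" using altf_even[OF c] by blast
  have "n dvd (- k) - k" using altf_inj[OF c] e by (simp add: mod_eq_dvd_iff)
  moreover have "(- k) - k = - (2 * k)" by simp
  ultimately have "2 * h dvd 2 * k" using h by (simp only: dvd_minus_iff)
  then have "h dvd k" by simp
  then obtain t where t: "k = h * t" by blast
  show ?thesis
  proof (cases "even t")
    case True
    then obtain u where "t = 2 * u" by blast
    then have "k = 0 + u * n" using t h by simp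
    then show ?thesis using altf_per[OF c, of 0 u] by simp
  next
    case False
    then obtain u where "t = 2 * u + 1" by (metis oddE)
    then have "k = h + u * n" using t h by (simp add: algebra_simps)
    moreover have "h = n div 2" using h by simp
    ultimately have "k = n div 2 + u * n" by simp
    then show ?thesis using altf_per[OF c, of "n div 2" u] by simp
  qed
qed

lemma half_ne: "altf c n \<Longrightarrow> c (n div 2) \<noteq> c 0"
proof
  assume c: "altf c n" and e: "c (n div 2) = c 0"
  have "(n div 2) mod n = 0" using altf_inj[OF c] e by simp
  moreover have "0 < n div 2" "n div 2 < n" using altf_n[OF c] by simp_all
  ultimately show False by simp
qed

lemma half_neg: "altf c n \<Longrightarrow> c (- (n div 2)) = c (n div 2)"
proof -
  assume c: "altf c n"
  obtain h where h: "n = 2 * h" using altf_even[OF c] by blast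
  have e: "- (n div 2) + 1 * n = n div 2" unfolding h by simp
  then show ?thesis using altf_per[OF c, of "- (n div 2)" 1] by metis
qed

lemma act_D:
  assumes g: "g \<in> G" and d: "altf d m" and f: "g (d 0) = d 0"
  shows "(\<forall>k. g (d k) = d k) \<or> (\<forall>k. g (d k) = d (- k))"
proof -
  have gd: "altf (g \<circ> d) m" using altf_g[OF g d] .
  have "((\<forall>k. (g \<circ> d) k = d k) \<or> (\<forall>k. (g \<circ> d) k = d (- k))) \<and> m = m"
  proof -
    have "tlf d 0 \<longleftrightarrow> tlf (g \<circ> d) 0" using tlf_g[OF g, of d 0] by simp
    moreover have "d 0 = (g \<circ> d) 0" using f by simp
    ultimately show ?thesis using same_role[OF d gd] by blast
  qed
  then show ?thesis by simp
qed

lemma S1: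
  assumes c: "altf c n" and d: "altf d m" and v: "c 0 = d 0"
    and ev: "even (card (range c \<inter> range d))"
  shows "c (n div 2) \<in> range d"
proof (rule ccontr)
  assume nin: "c (n div 2) \<notin> range d"
  obtain \<sigma> where s: "\<sigma> \<in> G" "\<forall>k. \<sigma> (c k) = c (- k)" using refl_exists[OF c] by blast
  have s0: "\<sigma> (d 0) = d 0" using s(2)[rule_format, of 0] v by simp
  have sd: "(\<forall>k. \<sigma> (d k) = d k) \<or> (\<forall>k. \<sigma> (d k) = d (- k))" using act_D[OF s(1) d s0] .
  define B where "B = range c \<inter> range d"
  have fin: "finite B" unfolding B_def using altf_V[OF c] finV by (meson finite_subset image_subset_iff inf.coboundedI1)
  have cl: "\<forall>x\<in>B. \<sigma> x \<in> B \<and> \<sigma> (\<sigma> x) = x"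
  proof
    fix x assume "x \<in> B"
    then obtain k l where kl: "x = c k" "x = d l" unfolding B_def by blast
    have "\<sigma> x \<in> range c" using s kl by simp
    moreover have "\<sigma> x \<in> range d" using sd kl(2) by (metis rangeI)
    moreover have "\<sigma> (\<sigma> x) = x" using s kl by simp
    ultimately show "\<sigma> x \<in> B \<and> \<sigma> (\<sigma> x) = x" unfolding B_def by blast
  qed
  have "{x\<in>B. \<sigma> x = x} = {c 0}"
  proof
    have "\<sigma> (c 0) = c 0" using s(2)[rule_format, of 0] by simp
    moreover have "c 0 \<in> range c" by simp
    moreover have "c 0 \<in> range d" using v by (metis rangeI)
    ultimately show "{c 0} \<subseteq> {x\<in>B. \<sigma> x = x}" unfolding B_def by simp
    show "{x\<in>B. \<sigma> x = x} \<subseteq> {c 0}"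
    proof
      fix x assume x: "x \<in> {x\<in>B. \<sigma> x = x}"
      then obtain k where k: "x = c k" unfolding B_def by blast
      then have "c (- k) = c k" using x s by simp
      then have "x = c 0 \<or> x = c (n div 2)" using fix_pts[OF c] k by simp
      then show "x \<in> {c 0}" using x nin unfolding B_def by auto
    qed
  qed
  then have "odd (card B)" using inv_parity[OF fin cl] by simp
  then show False using ev unfolding B_def by simp
qed

lemma S2:
  assumes c: "altf c n" and d: "altf d m" and v: "c 0 = d 0"
    and ev: "even (card (range c \<inter> range d))"
  shows "c (n div 2) = d (m div 2)"
proof -
  obtain \<sigma> where s: "\<sigma> \<in> G" "\<forall>k. \<sigma> (c k) = c (- k)" using refl_exists[OF c] by blast
  have s0: "\<sigma> (d 0) = d 0" using s(2)[rule_format, of 0] v by simp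
  obtain l where l: "c (n div 2) = d l" using S1[OF c d v ev] by blast
  have sh: "\<sigma> (c (n div 2)) = c (n div 2)" using s half_neg[OF c] by simp
  show ?thesis
  proof (cases "\<forall>k. \<sigma> (d k) = d k")
    case False
    then have r: "\<forall>k. \<sigma> (d k) = d (- k)" using act_D[OF s(1) d s0] by blast
    then have "d (- l) = d l" using sh l by simp
    then have "d l = d 0 \<or> d l = d (m div 2)" using fix_pts[OF d] by simp
    then show ?thesis using l v half_ne[OF c] by auto
  next
    case True
    have ev': "even (card (range d \<inter> range c))" using ev by (simp add: Int_commute)
    obtain k where k: "d (m div 2) = c k" using S1[OF d c v[symmetric] ev'] by blast
    have "c (- k) = c k" using s k True by metis
    then have "c k = c 0 \<or> c k = c (n div 2)" using fix_pts[OF c] by simp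
    then show ?thesis using k v half_ne[OF d] by auto
  qed
qed


lemma alt_list:
  assumes a: "alt_cycle V E G C"
  shows "altf (cyc C) (int (length C))"
proof -
  define n where "n = length C"
  have cy: "is_cycle V E C" using a unfolding alt_cycle_def by blast
  have n3: "n \<ge> 3" and dist: "distinct C" using cy unfolding is_cycle_def n_def by auto
  have n0: "length C > 0" using n3 n_def by linarith
  have loc: "tlf (cyc C) (int i) \<or> hdf (cyc C) (int i)" if i: "i < n" for i
  proof -
    have e1: "cyc C (int i) = C ! i" using i n_def cyc_nth by simp
    have e2: "cyc C (int i + 1) = C ! ((i + 1) mod n)" using cyc_nat[of C "i + 1"] n_def by (simp add: add.commute)
    have e3: "cyc C (int i - 1) = C ! ((i + n - 1) mod n)"
    proof -
      have "cyc C (int i - 1) = cyc C (int (i + n - 1))"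
      proof (rule cyc_cong)
        have "int (i + n - 1) = (int i - 1) + int (length C)" using n3 n_def by (simp add: of_nat_diff)
        then show "(int i - 1) mod int (length C) = int (i + n - 1) mod int (length C)" by simp
      qed
      then show ?thesis using cyc_nat[of C "i + n - 1"] n_def by simp
    qed
    have "let n = length C; v = C ! i; p = C ! ((i + n - 1) mod n); q = C ! ((i + 1) mod n) in
        (orient E G v p \<and> orient E G v q) \<or> (orient E G p v \<and> orient E G q v)"
      using a i n_def unfolding alt_cycle_def by blast
    then show ?thesis unfolding tlf_def hdf_def Let_def e1 e2 e3 n_def .
  qed
  have red: "cyc C k = cyc C (int (nat (k mod int n)))" for k
    using cyc_idx[OF n0] n_def by (metis cyc_cong mod_mod_trivial)
  have "tlf (cyc C) k \<or> hdf (cyc C) k" for k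
  proof -
    define i where "i = nat (k mod int n)"
    have i: "i < n" "int i = k mod int n" using cyc_idx[OF n0] n_def unfolding i_def by auto
    have "cyc C k = cyc C (int i)" "cyc C (k + 1) = cyc C (int i + 1)" "cyc C (k - 1) = cyc C (int i - 1)"
      by (rule cyc_cong, simp add: i(2) n_def[symmetric] mod_simps)+
    then show ?thesis using loc[OF i(1)] unfolding tlf_def hdf_def by simp
  qed
  moreover have "cyc C k = cyc C l \<longleftrightarrow> k mod int n = l mod int n" for k l
  proof -
    have "cyc C k = C ! nat (k mod int n)" "cyc C l = C ! nat (l mod int n)" unfolding cyc_def n_def by simp_all
    moreover have "nat (k mod int n) < length C" "nat (l mod int n) < length C" using cyc_idx[OF n0] n_def by auto
    ultimately have "cyc C k = cyc C l \<longleftrightarrow> nat (k mod int n) = nat (l mod int n)"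
      using nth_eq_iff_index_eq[OF dist] by simp
    also have "\<dots> \<longleftrightarrow> k mod int n = l mod int n" using n0 n_def by (simp add: nat_eq_iff2) (metis eq_commute)
    finally show ?thesis .
  qed
  ultimately show ?thesis unfolding altf_def n_def using n3 n_def by simp
qed


lemma range_same:
  assumes c: "altf c n" and d: "altf d m" and v: "c 0 = d 0" and r: "tlf c 0 \<longleftrightarrow> tlf d 0"
  shows "range d = range c"
proof -
  have "(\<forall>k. d k = c k) \<or> (\<forall>k. d k = c (- k))" using same_role[OF c d v r] by blast
  then show ?thesis
  proof
    assume "\<forall>k. d k = c k" then have "d = c" by auto
    then show ?thesis by simp
  next
    assume "\<forall>k. d k = c (- k)" then have "d = (\<lambda>k. c (- k))" by auto
    then show ?thesis using range_rev by simp
  qed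
qed

lemma edges_same:
  assumes c: "altf c n" and d: "altf d m" and v: "c 0 = d 0" and r: "tlf c 0 \<longleftrightarrow> tlf d 0"
  shows "edgesf d = edgesf c"
proof -
  have "(\<forall>k. d k = c k) \<or> (\<forall>k. d k = c (- k))" using same_role[OF c d v r] by blast
  then show ?thesis
  proof
    assume "\<forall>k. d k = c k" then have "d = c" by auto
    then show ?thesis by simp
  next
    assume "\<forall>k. d k = c (- k)" then have "d = (\<lambda>k. c (- k))" by auto
    then show ?thesis using edgesf_rev by simp
  qed
qed

lemma altf_succ: "altf d m \<Longrightarrow> d k = d l \<Longrightarrow> d (k + j) = d (l + j)"
  using altf_inj[of d m] by (metis mod_add_cong)

lemma edges_diff:
  assumes c: "altf c n" and d: "altf d m" and v: "c 0 = d 0" and r: "tlf c 0" "\<not> tlf d 0"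
  shows "edgesf c \<noteq> edgesf d"
proof
  assume eq: "edgesf c = edgesf d"
  have "{c 0, c 1} \<in> edgesf c" unfolding edgesf_def by (intro CollectI exI[of _ 0]) simp
  then have "{c 0, c 1} \<in> edgesf d" using eq by simp
  then obtain k where k: "{c 0, c 1} = {d k, d (k + 1)}" unfolding edgesf_def by blast
  have ar1: "ar (c 0) (c 1)" using r(1) unfolding tlf_def by simp
  have hd: "hdf d 0" using r(2) tl_hd[OF d] by blast
  then have h1: "ar (d 1) (d 0)" "ar (d (-1)) (d 0)" unfolding hdf_def by simp_all
  from k have "(c 0 = d k \<and> c 1 = d (k + 1)) \<or> (c 0 = d (k + 1) \<and> c 1 = d k)"
    by (simp add: doubleton_eq_iff)
  then show False
  proof
    assume a: "c 0 = d k \<and> c 1 = d (k + 1)"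
    then have "d k = d 0" using v by simp
    then have "d (k + 1) = d (0 + 1)" using altf_succ[OF d] by blast
    then have "c 1 = d 1" using a by simp
    then show False using h1(1) ar1 v ar_antisym by metis
  next
    assume a: "c 0 = d (k + 1) \<and> c 1 = d k"
    then have "d (k + 1) = d 0" using v by simp
    then have "d (k + 1 + -1) = d (0 + -1)" using altf_succ[OF d] by blast
    then have "c 1 = d (-1)" using a by simp
    then show False using h1(2) ar1 v ar_antisym by metis
  qed
qed

lemma card_g: "g \<in> G \<Longrightarrow> card (range (g \<circ> a) \<inter> range (g \<circ> b)) = card (range a \<inter> range b)"
proof -
  assume g: "g \<in> G"
  have "range (g \<circ> a) = g ` range a" "range (g \<circ> b) = g ` range b" by (simp_all add: image_comp)
  then have "range (g \<circ> a) \<inter> range (g \<circ> b) = g ` (range a \<inter> range b)"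
    using image_Int[OF G_inj[OF g]] by simp
  then show ?thesis using G_inj[OF g] by (simp add: card_image inj_on_subset)
qed

lemma part1:
  assumes ev: "even (att V E G)"
    and C: "alt_cycle V E G C" and C': "alt_cycle V E G C'"
    and i: "i < length C" and j: "j < length C'" and eqv: "C ! i = C' ! j"
  shows "antipode C i = antipode C' j"
proof -
  define N where "N = int (length C)"
  define M where "M = int (length C')"
  define c where "c = (\<lambda>k. cyc C (int i + k))"
  define d where "d = (\<lambda>k. cyc C' (int j + k))"
  have ac: "altf c N" unfolding c_def N_def using altf_shift[OF alt_list[OF C]] .
  have ad: "altf d M" unfolding d_def M_def using altf_shift[OF alt_list[OF C']] .
  have v: "c 0 = d 0" unfolding c_def d_def using cyc_nth[OF i] cyc_nth[OF j] eqv by simp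
  have apc: "antipode C i = c (N div 2)" unfolding c_def N_def using antipode_cyc[OF i] .
  have apd: "antipode C' j = d (M div 2)" unfolding d_def M_def using antipode_cyc[OF j] .
  have l0: "length C > 0" "length C' > 0" using i j by auto
  have rc: "range c = set C" unfolding c_def using set_cyc[OF l0(1)] range_shift by metis
  have rd: "range d = set C'" unfolding d_def using set_cyc[OF l0(2)] range_shift by metis
  have ec: "edgesf c = cycle_edges C" unfolding c_def using edges_cyc[OF l0(1)] edgesf_shift by metis
  have ed: "edgesf d = cycle_edges C'" unfolding d_def using edges_cyc[OF l0(2)] edgesf_shift by metis
  show ?thesis
  proof (cases "tlf c 0 \<longleftrightarrow> tlf d 0")
    case True
    have "((\<forall>k. d k = c k) \<or> (\<forall>k. d k = c (- k))) \<and> N = M" using same_role[OF ac ad v True] .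
    then show ?thesis using apc apd half_neg[OF ac] by auto
  next
    case False
    have ne: "cycle_edges C \<noteq> cycle_edges C'"
    proof (cases "tlf c 0")
      case True then show ?thesis using edges_diff[OF ac ad v] False ec ed by auto
    next
      case F2: False
      then have "tlf d 0" using False by blast
      then show ?thesis using edges_diff[OF ad ac v[symmetric]] F2 ec ed by auto
    qed
    have ex: "\<exists>P. alt_cycle V E G (fst P) \<and> alt_cycle V E G (snd P)
        \<and> cycle_edges (fst P) \<noteq> cycle_edges (snd P) \<and> set (fst P) \<inter> set (snd P) \<noteq> {}"
    proof -
      have "C ! i \<in> set C \<inter> set C'" using i j eqv by (metis IntI nth_mem)
      then show ?thesis using C C' ne by (intro exI[of _ "(C, C')"]) auto
    qed
    define P where "P = (SOME P. alt_cycle V E G (fst P) \<and> alt_cycle V E G (snd P)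
        \<and> cycle_edges (fst P) \<noteq> cycle_edges (snd P) \<and> set (fst P) \<inter> set (snd P) \<noteq> {})"
    have P: "alt_cycle V E G (fst P)" "alt_cycle V E G (snd P)"
        "cycle_edges (fst P) \<noteq> cycle_edges (snd P)" "set (fst P) \<inter> set (snd P) \<noteq> {}"
      using someI_ex[OF ex] unfolding P_def by blast+
    have attP: "att V E G = card (set (fst P) \<inter> set (snd P))" unfolding att_def P_def Let_def ..
    obtain u where u: "u \<in> set (fst P)" "u \<in> set (snd P)" using P(4) by blast
    obtain p q where pq: "p < length (fst P)" "fst P ! p = u" "q < length (snd P)" "snd P ! q = u"
      using u by (metis in_set_conv_nth)
    define c1 where "c1 = (\<lambda>k. cyc (fst P) (int p + k))"
    define c2 where "c2 = (\<lambda>k. cyc (snd P) (int q + k))"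
    have ac1: "altf c1 (int (length (fst P)))" unfolding c1_def using altf_shift[OF alt_list[OF P(1)]] .
    have ac2: "altf c2 (int (length (snd P)))" unfolding c2_def using altf_shift[OF alt_list[OF P(2)]] .
    have u1: "c1 0 = u" "c2 0 = u" unfolding c1_def c2_def using cyc_nth[OF pq(1)] cyc_nth[OF pq(3)] pq(2,4) by simp_all
    have l1: "length (fst P) > 0" "length (snd P) > 0" using pq by auto
    have rc1: "range c1 = set (fst P)" unfolding c1_def using set_cyc[OF l1(1)] range_shift by metis
    have rc2: "range c2 = set (snd P)" unfolding c2_def using set_cyc[OF l1(2)] range_shift by metis
    have ec1: "edgesf c1 = cycle_edges (fst P)" unfolding c1_def using edges_cyc[OF l1(1)] edgesf_shift by metis
    have ec2: "edgesf c2 = cycle_edges (snd P)" unfolding c2_def using edges_cyc[OF l1(2)] edgesf_shift by metis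
    have r12: "\<not> (tlf c1 0 \<longleftrightarrow> tlf c2 0)"
    proof
      assume "tlf c1 0 \<longleftrightarrow> tlf c2 0"
      then have "edgesf c2 = edgesf c1" using edges_same[OF ac1 ac2] u1 by simp
      then show False using P(3) ec1 ec2 by simp
    qed
    have uV: "u \<in> V" using altf_V[OF ac1] u1 by metis
    have vV: "c 0 \<in> V" using altf_V[OF ac] .
    obtain g where g: "g \<in> G" "g u = c 0" using vtrans[OF uV vV] by blast
    have ag1: "altf (g \<circ> c1) (int (length (fst P)))" using altf_g[OF g(1) ac1] .
    have ag2: "altf (g \<circ> c2) (int (length (snd P)))" using altf_g[OF g(1) ac2] .
    have g0: "(g \<circ> c1) 0 = c 0" "(g \<circ> c2) 0 = c 0" using g u1 by simp_all
    have t1: "tlf (g \<circ> c1) 0 \<longleftrightarrow> tlf c1 0" "tlf (g \<circ> c2) 0 \<longleftrightarrow> tlf c2 0" using tlf_g[OF g(1)] by blast+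
    have cardeq: "card (range (g \<circ> c1) \<inter> range (g \<circ> c2)) = att V E G"
      using card_g[OF g(1), of c1 c2] rc1 rc2 attP by (simp del: comp_apply)
    have "card (range c \<inter> range d) = att V E G"
    proof (cases "tlf c 0 \<longleftrightarrow> tlf c1 0")
      case True
      have "range (g \<circ> c1) = range c" using range_same[OF ac ag1] g0 t1 True by simp
      moreover have "range (g \<circ> c2) = range d" using range_same[OF ad ag2] g0 t1 True False r12 v by simp
      ultimately show ?thesis using cardeq by simp
    next
      case F3: False
      have "range (g \<circ> c2) = range c" using range_same[OF ac ag2] g0 t1 F3 r12 by simp
      moreover have "range (g \<circ> c1) = range d" using range_same[OF ad ag1] g0 t1 F3 False v by simp
      ultimately show ?thesis using cardeq by (simp add: Int_commute)
    qed
    then have "even (card (range c \<inter> range d))" using ev by simp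
    then show ?thesis using S2[OF ac ad v] apc apd by simp
  qed
qed


lemma alt_set: "alt_cycle V E G C \<Longrightarrow> set C \<subseteq> V"
  unfolding alt_cycle_def is_cycle_def by blast

lemma alt_len: "alt_cycle V E G C \<Longrightarrow> length C \<ge> 3"
  unfolding alt_cycle_def is_cycle_def by blast

lemma alt_even: "alt_cycle V E G C \<Longrightarrow> even (length C)"
  using altf_even[OF alt_list] by simp

lemma map_alt:
  assumes g: "g \<in> G" and a: "alt_cycle V E G C"
  shows "alt_cycle V E G (map g C)"
proof -
  define n where "n = length C"
  have cy: "is_cycle V E C" using a unfolding alt_cycle_def by blast
  have n3: "n \<ge> 3" and dist: "distinct C" and sV: "set C \<subseteq> V"
    and ed: "\<forall>i<n. E (C ! i) (C ! ((i + 1) mod n))" using cy unfolding is_cycle_def n_def by auto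
  have n0: "n > 0" using n3 by linarith
  have "is_cycle V E (map g C)"
    unfolding is_cycle_def
  proof (intro conjI allI impI)
    show "3 \<le> length (map g C)" using n3 n_def by simp
    show "distinct (map g C)" using dist G_inj[OF g] by (metis distinct_map inj_on_subset subset_UNIV)
    show "set (map g C) \<subseteq> V" using sV G_V[OF g] by auto
    fix i assume i: "i < length (map g C)"
    have "(i + 1) mod n < n" using n0 by simp
    then show "E (map g C ! i) (map g C ! ((i + 1) mod length (map g C)))"
      using ed i G_E[OF g] n_def by simp
  qed
  moreover have "\<forall>i < length (map g C).
        let n = length (map g C); v = map g C ! i; p = map g C ! ((i + n - 1) mod n); q = map g C ! ((i + 1) mod n) in
        (orient E G v p \<and> orient E G v q) \<or> (orient E G p v \<and> orient E G q v)"
  proof (intro allI impI)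
    fix i assume i: "i < length (map g C)"
    have lt: "(i + n - 1) mod n < n" "(i + 1) mod n < n" using n0 by simp_all
    have "let n = length C; v = C ! i; p = C ! ((i + n - 1) mod n); q = C ! ((i + 1) mod n) in
        (orient E G v p \<and> orient E G v q) \<or> (orient E G p v \<and> orient E G q v)"
      using a i unfolding alt_cycle_def by simp
    then show "let n = length (map g C); v = map g C ! i; p = map g C ! ((i + n - 1) mod n); q = map g C ! ((i + 1) mod n) in
        (orient E G v p \<and> orient E G v q) \<or> (orient E G p v \<and> orient E G q v)"
      using lt i n_def ar_g_iff[OF g] unfolding Let_def by simp
  qed
  ultimately show ?thesis unfolding alt_cycle_def by blast
qed

definition "onc x \<longleftrightarrow> (\<exists>C i. alt_cycle V E G C \<and> i < length C \<and> C ! i = x)"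
definition "tau x = (if onc x then (SOME y. \<exists>C i. alt_cycle V E G C \<and> i < length C \<and> C ! i = x \<and> y = antipode C i) else x)"

lemma onc_V: "onc x \<Longrightarrow> x \<in> V"
  unfolding onc_def using alt_set nth_mem by blast

lemma tau_ap:
  assumes ev: "even (att V E G)" and C: "alt_cycle V E G C" and i: "i < length C"
  shows "tau (C ! i) = antipode C i"
proof -
  have o: "onc (C ! i)" unfolding onc_def using C i by blast
  have "\<exists>y. \<exists>C' j. alt_cycle V E G C' \<and> j < length C' \<and> C' ! j = C ! i \<and> y = antipode C' j"
    using C i by blast
  then obtain C' j where cj: "alt_cycle V E G C'" "j < length C'" "C' ! j = C ! i" "tau (C ! i) = antipode C' j"
    using someI_ex[of "\<lambda>y. \<exists>C' j. alt_cycle V E G C' \<and> j < length C' \<and> C' ! j = C ! i \<and> y = antipode C' j"]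
    unfolding tau_def using o by (metis (no_types, lifting))
  then show ?thesis using part1[OF ev C cj(1) i cj(2)] by simp
qed

lemma tau_off: "\<not> onc x \<Longrightarrow> tau x = x" unfolding tau_def by simp

lemma ap_nth: "i < length C \<Longrightarrow> antipode C i = C ! ((i + length C div 2) mod length C)
   \<and> (i + length C div 2) mod length C < length C"
proof -
  assume "i < length C"
  then have "length C > 0" by (rule le_less_trans[OF le0])
  then show ?thesis unfolding antipode_def by simp
qed

lemma tau_tau:
  assumes ev: "even (att V E G)"
  shows "tau (tau x) = x"
proof (cases "onc x")
  case True
  then obtain C i where C: "alt_cycle V E G C" "i < length C" "C ! i = x" unfolding onc_def by blast
  define n where "n = length C"
  define i' where "i' = (i + n div 2) mod n"
  have n: "even n" "n > 0" using alt_even[OF C(1)] alt_len[OF C(1)] n_def by auto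
  have i': "i' < n" "tau x = C ! i'" using tau_ap[OF ev C(1,2)] C(3) ap_nth[OF C(2)] unfolding i'_def n_def by auto
  have "tau (C ! i') = antipode C i'" using tau_ap[OF ev C(1)] i' n_def by simp
  also have "\<dots> = C ! ((i' + n div 2) mod n)" using ap_nth[of i' C] i' n_def by simp
  finally have "tau (C ! i') = C ! ((i' + n div 2) mod n)" .
  moreover have "(i' + n div 2) mod n = i"
  proof -
    have "(i' + n div 2) mod n = (i + n div 2 + n div 2) mod n" unfolding i'_def by (simp add: mod_simps)
    also have "\<dots> = (i + n) mod n" using n(1) by (metis add.assoc dvd_mult_div_cancel mult_2)
    also have "\<dots> = i" using C(2) n_def by simp
    finally show ?thesis .
  qed
  ultimately show ?thesis using i' C(3) by simp
next
  case False then show ?thesis by (simp add: tau_off)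
qed

lemma tau_Vmap: "x \<in> V \<Longrightarrow> tau x \<in> V"
proof (cases "onc x")
  case True
  then obtain C i where C: "alt_cycle V E G C" "i < length C" "C ! i = x" unfolding onc_def by blast
  have "\<exists>y. \<exists>C' j. alt_cycle V E G C' \<and> j < length C' \<and> C' ! j = x \<and> y = antipode C' j"
    using C by blast
  then obtain C' j where cj: "alt_cycle V E G C'" "j < length C'" "tau x = antipode C' j"
    using someI_ex[of "\<lambda>y. \<exists>C' j. alt_cycle V E G C' \<and> j < length C' \<and> C' ! j = x \<and> y = antipode C' j"]
    unfolding tau_def using True by (metis (no_types, lifting))
  then show ?thesis using ap_nth[OF cj(2)] alt_set[OF cj(1)] nth_mem by (metis subsetD)
qed (simp add: tau_off)

lemma tau_g:
  assumes ev: "even (att V E G)" and g: "g \<in> G"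
  shows "tau (g x) = g (tau x)"
proof (cases "onc x")
  case True
  then obtain C i where C: "alt_cycle V E G C" "i < length C" "C ! i = x" unfolding onc_def by blast
  have mC: "alt_cycle V E G (map g C)" using map_alt[OF g C(1)] .
  have "tau (g x) = tau (map g C ! i)" using C by simp
  also have "\<dots> = antipode (map g C) i" using tau_ap[OF ev mC] C(2) by simp
  also have "\<dots> = g (antipode C i)" using ap_nth[OF C(2)] unfolding antipode_def by simp
  also have "\<dots> = g (tau x)" using tau_ap[OF ev C(1,2)] C(3) by simp
  finally show ?thesis .
next
  case False
  have "\<not> onc (g x)"
  proof
    assume "onc (g x)"
    then obtain D j where D: "alt_cycle V E G D" "j < length D" "D ! j = g x" unfolding onc_def by blast
    have "alt_cycle V E G (map (inv g) D)" using map_alt[OF G_inv[OF g] D(1)] .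
    moreover have "map (inv g) D ! j = x" using D G_inv_f[OF g] by simp
    ultimately have "onc x" unfolding onc_def using D(2) by (metis length_map)
    then show False using False by simp
  qed
  then show ?thesis using False by (simp add: tau_off)
qed

lemma tau_arc:
  assumes ev: "even (att V E G)" and xy: "ar x y"
  shows "E (tau x) (tau y)"
proof (cases "\<exists>C. alt_cycle V E G C")
  case False
  then have "\<And>z. \<not> onc z" unfolding onc_def by blast
  then show ?thesis using ar_E[OF xy] by (simp add: tau_off)
next
  case True
  then obtain C where C: "alt_cycle V E G C" by blast
  define n where "n = length C"
  have n3: "n \<ge> 3" using alt_len[OF C] n_def by simp
  have ac: "altf (cyc C) (int n)" using alt_list[OF C] n_def by simp
  have Cne: "C \<noteq> []" using n3 n_def by auto
  have "\<exists>a. a + 1 < n \<and> ar (C ! a) (C ! (a + 1))"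
  proof (cases "ar (cyc C 0) (cyc C 1)")
    case True
    then show ?thesis using n3 Cne cyc_nth[of 0 C] cyc_nth[of 1 C] n_def by (intro exI[of _ 0]) simp
  next
    case False
    then have a10: "ar (cyc C 1) (cyc C 0)" using altf_ar[OF ac, of 0] by simp
    then have "\<not> hdf (cyc C) 1" unfolding hdf_def using ar_antisym by simp
    then have "tlf (cyc C) 1" using tl_hd[OF ac] by blast
    then have "ar (cyc C 1) (cyc C 2)" unfolding tlf_def by simp
    then show ?thesis using n3 Cne cyc_nth[of 1 C] cyc_nth[of 2 C] n_def by (intro exI[of _ 1]) (simp add: numeral_2_eq_2)
  qed
  then obtain a where a: "a + 1 < n" "ar (C ! a) (C ! (a + 1))" by blast
  obtain g where g: "g \<in> G" "(g (C ! a) = x \<and> g (C ! (a + 1)) = y) \<or> (g (C ! a) = y \<and> g (C ! (a + 1)) = x)"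
    using etrans[OF ar_E[OF a(2)] ar_E[OF xy]] by blast
  have "\<not> (g (C ! a) = y \<and> g (C ! (a + 1)) = x)"
  proof
    assume "g (C ! a) = y \<and> g (C ! (a + 1)) = x"
    then have "ar y x" using ar_g[OF g(1) a(2)] by simp
    then show False using xy ar_antisym by blast
  qed
  then have gxy: "g (C ! a) = x" "g (C ! (a + 1)) = y" using g(2) by blast+
  have a0: "a < length C" "a + 1 < length C" using a(1) n_def by simp_all
  have t1: "tau x = g (antipode C a)"
    using gxy(1) tau_g[OF ev g(1), of "C ! a"] tau_ap[OF ev C a0(1)] by simp
  have t2: "tau y = g (antipode C (a + 1))"
    using gxy(2) tau_g[OF ev g(1), of "C ! (a + 1)"] tau_ap[OF ev C a0(2)] by simp
  have "antipode C a = cyc C (int a + int n div 2)" using antipode_cyc[of a C] a(1) n_def by simp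
  moreover have "antipode C (a + 1) = cyc C (int a + int n div 2 + 1)" using antipode_cyc[of "a + 1" C] a(1) n_def
    by (simp add: algebra_simps)
  ultimately have "E (antipode C a) (antipode C (a + 1))" using altf_E[OF ac] by simp
  then show ?thesis using t1 t2 G_E[OF g(1)] by simp
qed

lemma tau_E:
  assumes ev: "even (att V E G)" and xy: "E x y"
  shows "E (tau x) (tau y)"
  using ar_total[OF xy] tau_arc[OF ev] Esym by blast

end

lemma main:
  fixes V :: "'a set" and E :: "'a \<Rightarrow> 'a \<Rightarrow> bool" and G :: "('a \<Rightarrow> 'a) set"
  assumes "simple_graph V E" and "tetravalent V E"
    and "aut_subgroup V E G" and "half_arc_transitive V E G"
    and ev: "even (att V E G)"
  shows "(\<forall>v\<in>V. \<forall>C C' i j. alt_cycle V E G C \<and> alt_cycle V E G C' \<and> i < length C \<and> j < length C'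
            \<and> C ! i = v \<and> C' ! j = v \<longrightarrow> antipode C i = antipode C' j)
    \<and> (\<exists>\<tau>. (\<forall>C i. alt_cycle V E G C \<and> i < length C \<longrightarrow> \<tau> (C ! i) = antipode C i)
           \<and> \<tau> \<circ> \<tau> = id \<and> graph_aut V E \<tau> \<and> (\<forall>g\<in>G. \<tau> \<circ> g = g \<circ> \<tau>))"
proof -
  interpret hat V E G using assms(1-4) by unfold_locales
  have p1: "\<forall>v\<in>V. \<forall>C C' i j. alt_cycle V E G C \<and> alt_cycle V E G C' \<and> i < length C \<and> j < length C'
            \<and> C ! i = v \<and> C' ! j = v \<longrightarrow> antipode C i = antipode C' j"
  proof (intro ballI allI impI)
    fix v C C' i j assume h: "alt_cycle V E G C \<and> alt_cycle V E G C' \<and> i < length C \<and> j < length C'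
            \<and> C ! i = v \<and> C' ! j = v"
    show "antipode C i = antipode C' j" by (rule part1[OF ev]) (use h in auto)
  qed
  have tt: "tau \<circ> tau = id" using tau_tau[OF ev] by (simp add: fun_eq_iff)
  have off: "\<forall>x. x \<notin> V \<longrightarrow> tau x = x" using onc_V tau_off by blast
  have bij: "bij_betw tau V V"
    by (rule bij_betw_byWitness[where f'=tau]) (use tau_tau[OF ev] tau_Vmap in auto)
  have ee: "\<forall>x\<in>V. \<forall>y\<in>V. E x y \<longleftrightarrow> E (tau x) (tau y)"
  proof (intro ballI iffI)
    fix x y assume "E x y" then show "E (tau x) (tau y)" by (rule tau_E[OF ev])
  next
    fix x y assume "E (tau x) (tau y)"
    then have "E (tau (tau x)) (tau (tau y))" by (rule tau_E[OF ev])
    then show "E x y" using tau_tau[OF ev] by simp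
  qed
  have ga: "graph_aut V E tau" unfolding graph_aut_def using bij off ee by blast
  have cm: "\<forall>g\<in>G. tau \<circ> g = g \<circ> tau" using tau_g[OF ev] by (simp add: fun_eq_iff)
  have ap: "\<forall>C i. alt_cycle V E G C \<and> i < length C \<longrightarrow> tau (C ! i) = antipode C i"
    using tau_ap[OF ev] by blast
  show ?thesis using p1 tt ga cm ap by blast
qed

theorem proposition3p1:
  fixes V :: "'a set" and E :: "'a \<Rightarrow> 'a \<Rightarrow> bool" and G :: "('a \<Rightarrow> 'a) set"
  assumes "simple_graph V E" and "tetravalent V E"
    and "aut_subgroup V E G" and "half_arc_transitive V E G"
    and "even (att V E G)"
  shows "(\<forall>v\<in>V. \<forall>C C' i j. alt_cycle V E G C \<and> alt_cycle V E G C' \<and> i < length C \<and> j < length C'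
            \<and> C ! i = v \<and> C' ! j = v \<longrightarrow> antipode C i = antipode C' j)
    \<and> (\<exists>\<tau>. (\<forall>C i. alt_cycle V E G C \<and> i < length C \<longrightarrow> \<tau> (C ! i) = antipode C i)
           \<and> \<tau> \<circ> \<tau> = id \<and> graph_aut V E \<tau> \<and> (\<forall>g\<in>G. \<tau> \<circ> g = g \<circ> \<tau>))"
  using assms by (rule main)

end
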